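(* Let $q\ge 2$ be an integer and let $\delta,\gamma\ge 0$ satisfy $\frac{\delta}{1-\frac1q}+\frac{\gamma}{q-1}\ge 1$. Then there is no infinite family of $q$-ary codes with rate bounded away from zero (block length $n\to\infty$) that is list-decodable, with list size $2^{o(n)}$, from $\delta n$ deletions and $\gamma n$ insertions.
   Context: A $q$-ary code of block length $n$ is a set $C\subseteq\Sigma^n$ with $|\Sigma|=q$; its rate is $\log_q|C|/n$. A string $y$ is obtained from $x$ by $D$ deletions and $I$ insertions if $y$ results from $x$ by deleting $D$ symbols and inserting $I$ symbols (at arbitrary positions, with arbitrary values). A code $C$ is $L$-list decodable from $\delta n$ deletions and $\gamma n$ insertions if for every string $y$ over $\Sigma$, at most $L$ codewords $x\in C$ are such that $y$ can be obtained from $x$ by at most $\delta n$ deletions and at most $\gamma n$ insertions. *)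

theory Defs
  imports "HOL-Analysis.Analysis" "HOL-Library.Sublist"
begin

definition is_code :: "nat \<Rightarrow> nat \<Rightarrow> nat list set \<Rightarrow> bool" where
  "is_code q n C \<longleftrightarrow> C \<subseteq> {x. length x = n \<and> set x \<subseteq> {0..<q}}"

definition code_rate :: "nat \<Rightarrow> nat \<Rightarrow> nat list set \<Rightarrow> real" where
  "code_rate q n C = log (real q) (real (card C)) / real n"

text \<open>y is obtained from x by deleting D symbols and inserting I symbols:
 the surviving symbols of x form a common subsequence z.\<close>
definition del_ins :: "nat \<Rightarrow> nat \<Rightarrow> 'a list \<Rightarrow> 'a list \<Rightarrow> bool" where
  "del_ins D I x y \<longleftrightarrow>
     (\<exists>z. subseq z x \<and> length z + D = length x \<and> subseq z y \<and> length y = length z + I)"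

definition list_decodable ::
  "nat \<Rightarrow> nat \<Rightarrow> nat list set \<Rightarrow> nat \<Rightarrow> real \<Rightarrow> real \<Rightarrow> bool" where
  "list_decodable q n C L \<delta> \<gamma> \<longleftrightarrow>
     (\<forall>y. set y \<subseteq> {0..<q} \<longrightarrow>
        finite {x\<in>C. \<exists>D I. real D \<le> \<delta> * real n \<and> real I \<le> \<gamma> * real n \<and> del_ins D I x y}
      \<and> card {x\<in>C. \<exists>D I. real D \<le> \<delta> * real n \<and> real I \<le> \<gamma> * real n \<and> del_ins D I x y} \<le> L)"

end

theory Submission
  imports Defs
begin

definition Yw :: "nat \<Rightarrow> nat \<Rightarrow> nat \<Rightarrow> nat \<Rightarrow> nat \<Rightarrow> nat list" where
  "Yw q m a c b = replicate c a @ b # concat (replicate (m - 1) [0..<q])"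

lemma subseq_cyc: "set s \<subseteq> {0..<q} \<Longrightarrow> subseq s (concat (replicate (length s) [0..<q]))"
proof (induction s)
  case Nil then show ?case by simp
next
  case (Cons x s)
  have "subseq [x] [0..<q]" using Cons.prems by (simp add: subseq_singleton_left)
  moreover have "subseq s (concat (replicate (length s) [0..<q]))" using Cons by simp
  ultimately have "subseq ([x] @ s) ([0..<q] @ concat (replicate (length s) [0..<q]))"
    by (rule list_emb_append_mono)
  then show ?case by simp
qed

lemma sum_filter_len: "set xs \<subseteq> {0..<(q::nat)} \<Longrightarrow> (\<Sum>a<q. length (filter (\<lambda>y. a = y) xs)) = length xs"
proof -
  assume h: "set xs \<subseteq> {0..<q}"
  have "set xs \<subseteq> {..<q}" using h by auto
  then have "sum (count_list xs) {..<q} = length xs" by (intro sum_count_set) auto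
  then show ?thesis by (simp add: count_list_eq_length_filter)
qed

lemma pigeon:
  assumes "set xs \<subseteq> {0..<q}" "q > 0"
  shows "\<exists>a<q. length xs \<le> q * length (filter (\<lambda>y. a = y) xs)"
proof (rule ccontr)
  assume "\<not> ?thesis"
  then have "\<And>a. a \<in> {..<q} \<Longrightarrow> q * length (filter (\<lambda>y. a = y) xs) < length xs" by auto
  then have "(\<Sum>a<q. q * length (filter (\<lambda>y. a = y) xs)) < (\<Sum>a<q. length xs)"
    using assms(2) by (intro sum_strict_mono) auto
  then have "q * length xs < q * length xs"
    using sum_filter_len[OF assms(1)] by (simp add: sum_distrib_left[symmetric])
  then show False by simp
qed


lemma key:
  fixes q n m :: nat and x :: "nat list" and \<delta> \<gamma> :: real
  assumes q2: "q \<ge> 2" and n0: "n > 0" and lx: "length x = n" and sx: "set x \<subseteq> {0..<q}"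
    and d0: "\<delta> \<ge> 0" and g0: "\<gamma> \<ge> 0" and hyp: "real q * \<delta> + \<gamma> \<ge> real q - 1"
    and m_def: "m = min n (nat \<lfloor>\<gamma> * real n / (real q - 1)\<rfloor> + 1)"
  shows "\<exists>a<q. \<exists>c\<le>n. \<exists>b<q. \<exists>D I. real D \<le> \<delta> * real n \<and> real I \<le> \<gamma> * real n
            \<and> del_ins D I x (Yw q m a c b)"
proof -
  define s where "s = \<gamma> * real n / (real q - 1)"
  have q1: "real q - 1 > 0" using q2 by simp
  have s0: "s \<ge> 0" using g0 q1 by (simp add: s_def)
  have gs: "\<gamma> * real n = (real q - 1) * s" using q1 by (simp add: s_def)
  define p where "p = n - m"
  have m1: "1 \<le> m" "m \<le> n" using n0 m_def by auto
  define pre where "pre = take p x"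
  define suf where "suf = drop p x"
  have xs: "x = pre @ suf" by (simp add: pre_def suf_def)
  have lpre: "length pre = p" using lx m1 by (simp add: pre_def p_def)
  have lsuf: "length suf = m" using lx m1 by (simp add: suf_def p_def)
  have spre: "set pre \<subseteq> {0..<q}" using sx xs by auto
  have ssuf: "set suf \<subseteq> {0..<q}" using sx xs by auto
  obtain a where a: "a < q" "length pre \<le> q * length (filter (\<lambda>y. a = y) pre)"
    using pigeon[OF spre] q2 by auto
  define c where "c = length (filter (\<lambda>y. a = y) pre)"
  have cp: "c \<le> p" using lpre length_filter_le[of _ pre] by (simp add: c_def)
  have qc: "p \<le> q * c" using a lpre by (simp add: c_def)
  obtain b rest where sb: "suf = b # rest" using lsuf m1 by (cases suf) auto
  have b: "b < q" using ssuf sb by auto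
  have lrest: "length rest = m - 1" using lsuf sb by simp
  have srest: "set rest \<subseteq> {0..<q}" using ssuf sb by auto
  define z where "z = replicate c a @ suf"
  have z1: "subseq z x"
  proof -
    have "subseq (replicate c a) pre"
      unfolding c_def replicate_length_filter by simp
    then show ?thesis unfolding z_def xs by (rule list_emb_append_mono) simp
  qed
  have z2: "subseq z (Yw q m a c b)"
  proof -
    have "subseq rest (concat (replicate (m - 1) [0..<q]))"
      using subseq_cyc[OF srest] lrest by simp
    then show ?thesis unfolding z_def Yw_def sb by (simp add: subseq_append')
  qed
  have lz: "length z = c + m" using lsuf by (simp add: z_def)
  have ly: "length (Yw q m a c b) = c + m + (q - 1) * (m - 1)"
  proof -
    obtain m' where mm: "m = Suc m'" using m1 by (cases m) auto
    obtain q' where qq: "q = Suc q'" using q2 by (cases q) auto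
    show ?thesis unfolding mm qq by (simp add: Yw_def length_concat sum_list_replicate algebra_simps)
  qed
  have di: "del_ins (p - c) ((q - 1) * (m - 1)) x (Yw q m a c b)"
    unfolding del_ins_def using z1 z2 lz ly lx cp m1 by (intro exI[of _ z]) (auto simp: p_def)
  have Dbound: "real (p - c) \<le> \<delta> * real n"
  proof -
    have "real p \<le> real (q * c)" using qc by (simp only: of_nat_le_iff)
    then have "real p \<le> real q * real c" by simp
    moreover have "real (p - c) = real p - real c" using cp by (simp add: of_nat_diff)
    ultimately have "real q * real (p - c) \<le> (real q - 1) * real p" by (simp add: algebra_simps)
    moreover have "(real q - 1) * real p \<le> real q * (\<delta> * real n)"
    proof (cases "m = n")
      case True then show ?thesis using d0 by (simp add: p_def)
    next
      case False
      then have "m = nat \<lfloor>s\<rfloor> + 1" using m_def by (simp add: s_def)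
      then have "real m > s" using s0 by linarith
      then have "real p \<le> real n - s" using m1 by (simp add: p_def of_nat_diff)
      then have "(real q - 1) * real p \<le> (real q - 1) * (real n - s)"
        using q1 by (intro mult_left_mono) auto
      also have "\<dots> = (real q - 1) * real n - \<gamma> * real n" using gs by (simp add: algebra_simps)
      also have "\<dots> \<le> real q * (\<delta> * real n)"
      proof -
        have "(real q - 1) * real n \<le> (real q * \<delta> + \<gamma>) * real n"
          by (rule mult_right_mono[OF hyp]) simp
        then show ?thesis by (simp add: algebra_simps)
      qed
      finally show ?thesis .
    qed
    ultimately have "real q * real (p - c) \<le> real q * (\<delta> * real n)" by linarith
    moreover have qpos: "real q > 0" using q2 by simp
    ultimately show ?thesis by (rule mult_left_le_imp_le)
  qed
  have Ibound: "real ((q - 1) * (m - 1)) \<le> \<gamma> * real n"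
  proof -
    have "m \<le> nat \<lfloor>s\<rfloor> + 1" unfolding m_def s_def by (rule min.cobounded2)
    then have "m - 1 \<le> nat \<lfloor>s\<rfloor>" by arith
    then have "real (m - 1) \<le> real (nat \<lfloor>s\<rfloor>)" by (simp only: of_nat_le_iff)
    also have "\<dots> \<le> s" using s0 by linarith
    finally have "real (m - 1) \<le> s" .
    then have "(real q - 1) * real (m - 1) \<le> (real q - 1) * s" using q1 by (intro mult_left_mono) auto
    moreover have "real (q - 1) = real q - 1" using q2 by (simp add: of_nat_diff)
    then have "real ((q - 1) * (m - 1)) = (real q - 1) * real (m - 1)" by (simp only: of_nat_mult)
    ultimately show ?thesis using gs by linarith
  qed
  have cn: "c \<le> n" using cp by (simp add: p_def)
  show ?thesis using a(1) b cn Dbound Ibound di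
    by (intro exI[where x=a] exI[where x=c] exI[where x=b] exI[where x="p-c"]
        exI[where x="(q-1)*(m-1)"] conjI) auto
qed

lemma count_bound:
  fixes q n :: nat and C :: "nat list set" and \<delta> \<gamma> :: real
  assumes q2: "q \<ge> 2" and n0: "n > 0" and d0: "\<delta> \<ge> 0" and g0: "\<gamma> \<ge> 0"
    and hyp: "real q * \<delta> + \<gamma> \<ge> real q - 1"
    and code: "is_code q n C" and ld: "list_decodable q n C L \<delta> \<gamma>"
  shows "card C \<le> q * (n + 1) * q * L"
proof -
  define m where "m = min n (nat \<lfloor>\<gamma> * real n / (real q - 1)\<rfloor> + 1)"
  define S where "S = (\<lambda>(a, c, b). {x\<in>C. \<exists>D I. real D \<le> \<delta> * real n \<and> real I \<le> \<gamma> * real n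
                 \<and> del_ins D I x (Yw q m a c b)})"
  define J where "J = {0..<q} \<times> {0..n} \<times> {0..<q}"
  have finJ: "finite J" by (simp add: J_def)
  have cardJ: "card J = q * (n + 1) * q" by (simp add: J_def card_cartesian_product)
  have sub: "C \<subseteq> (\<Union>j\<in>J. S j)"
  proof
    fix x assume xC: "x \<in> C"
    then have "length x = n" "set x \<subseteq> {0..<q}" using code by (auto simp: is_code_def)
    from key[OF q2 n0 this d0 g0 hyp m_def] obtain a c b D I where
      h: "a < q" "c \<le> n" "b < q" "real D \<le> \<delta> * real n" "real I \<le> \<gamma> * real n"
         "del_ins D I x (Yw q m a c b)" by blast
    then have "x \<in> S (a, c, b)" using xC unfolding S_def by blast
    moreover have "(a, c, b) \<in> J" using h by (simp add: J_def)
    ultimately show "x \<in> (\<Union>j\<in>J. S j)" by blast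
  qed
  have each: "finite (S j) \<and> card (S j) \<le> L" if "j \<in> J" for j
  proof -
    obtain a c b where j: "j = (a, c, b)" by (cases j) auto
    have ab: "a < q" "b < q" using that j by (auto simp: J_def)
    have "set (Yw q m a c b) \<subseteq> {0..<q}" using ab by (auto simp: Yw_def)
    then show ?thesis using ld unfolding list_decodable_def S_def j by simp
  qed
  have "card C \<le> card (\<Union>j\<in>J. S j)"
    using sub each finJ by (intro card_mono) auto
  also have "\<dots> \<le> (\<Sum>j\<in>J. card (S j))" by (rule card_UN_le[OF finJ])
  also have "\<dots> \<le> (\<Sum>j\<in>J. L)" using each by (intro sum_mono) auto
  also have "\<dots> = q * (n + 1) * q * L" using cardJ by simp
  finally show ?thesis .
qed

lemma asym:
  fixes t A :: real assumes t1: "t > 1"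
  shows "\<forall>\<^sub>F N in sequentially. A * (real N + 1) < t ^ N"
proof -
  have l1: "(\<lambda>N. real N / t ^ N) \<longlonglongrightarrow> 0" using lim_n_over_pown[of t] t1 by simp
  have "(\<lambda>N. (1 / t) ^ N) \<longlonglongrightarrow> 0" using t1 by (intro LIMSEQ_realpow_zero) auto
  then have l2: "(\<lambda>N. 1 / t ^ N) \<longlonglongrightarrow> 0" by (simp add: power_one_over)
  have "(\<lambda>N. A * (real N / t ^ N + 1 / t ^ N)) \<longlonglongrightarrow> A * (0 + 0)"
    by (intro tendsto_intros l1 l2)
  then have "\<forall>\<^sub>F N in sequentially. A * (real N / t ^ N + 1 / t ^ N) < 1"
    by (intro order_tendstoD(2)) auto
  then show ?thesis
  proof (rule eventually_mono)
    fix N assume h: "A * (real N / t ^ N + 1 / t ^ N) < 1"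
    have tp: "t ^ N > 0" using t1 by simp
    have "A * (real N / t ^ N + 1 / t ^ N) = A * (real N + 1) / t ^ N"
      by (metis add_divide_distrib times_divide_eq_right)
    then show "A * (real N + 1) < t ^ N" using h tp by (simp add: divide_less_eq)
  qed
qed

theorem proposition1:
  fixes q :: nat and \<delta> \<gamma> :: real
  assumes "q \<ge> 2" and "\<delta> \<ge> 0" and "\<gamma> \<ge> 0"
    and "\<delta> / (1 - 1 / real q) + \<gamma> / (real q - 1) \<ge> 1"
  shows "\<not> (\<exists>(n :: nat \<Rightarrow> nat) (C :: nat \<Rightarrow> nat list set) (L :: nat \<Rightarrow> nat) (r :: real).
            filterlim n at_top sequentially \<and>
            r > 0 \<and>
            (\<forall>k. is_code q (n k) (C k) \<and> code_rate q (n k) (C k) \<ge> r) \<and>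
            (\<forall>\<epsilon>>0. \<forall>\<^sub>F k in sequentially. real (L k) \<le> 2 powr (\<epsilon> * real (n k))) \<and>
            (\<forall>k. list_decodable q (n k) (C k) (L k) \<delta> \<gamma>))"
proof
  assume "\<exists>(n :: nat \<Rightarrow> nat) (C :: nat \<Rightarrow> nat list set) (L :: nat \<Rightarrow> nat) (r :: real).
            filterlim n at_top sequentially \<and>
            r > 0 \<and>
            (\<forall>k. is_code q (n k) (C k) \<and> code_rate q (n k) (C k) \<ge> r) \<and>
            (\<forall>\<epsilon>>0. \<forall>\<^sub>F k in sequentially. real (L k) \<le> 2 powr (\<epsilon> * real (n k))) \<and>
            (\<forall>k. list_decodable q (n k) (C k) (L k) \<delta> \<gamma>)"
  then obtain n C L r where nlim: "filterlim n at_top sequentially" and r0: "r > 0"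
    and codes: "\<And>k. is_code q (n k) (C k)" and rate: "\<And>k. code_rate q (n k) (C k) \<ge> r"
    and Lb: "\<And>\<epsilon>. \<epsilon> > 0 \<Longrightarrow> \<forall>\<^sub>F k in sequentially. real (L k) \<le> 2 powr (\<epsilon> * real (n k))"
    and ld: "\<And>k. list_decodable q (n k) (C k) (L k) \<delta> \<gamma>" by blast
  have q2: "q \<ge> 2" using assms by simp
  have u0: "real q - 1 > 0" using q2 by simp
  have qr: "real q > 1" using q2 by simp
  have hyp: "real q * \<delta> + \<gamma> \<ge> real q - 1"
  proof -
    have "1 - 1 / real q = (real q - 1) / real q" using qr by (simp add: field_simps)
    then have "\<delta> / (1 - 1 / real q) = real q * \<delta> / (real q - 1)" by simp
    then have "1 \<le> (real q * \<delta> + \<gamma>) / (real q - 1)" using assms(4) by (simp add: add_divide_distrib)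
    then show ?thesis using u0 by (simp add: le_divide_eq)
  qed
  have npos: "n k > 0" for k
  proof (rule ccontr)
    assume "\<not> n k > 0"
    then have "code_rate q (n k) (C k) = 0" by (simp add: code_rate_def)
    then show False using rate[of k] r0 by simp
  qed
  define \<epsilon> where "\<epsilon> = r * log 2 (real q) / 2"
  have e0: "\<epsilon> > 0" using r0 qr by (simp add: \<epsilon>_def)
  define t where "t = real q powr (r / 2)"
  have t1: "t > 1" unfolding t_def using qr r0 by (intro gr_one_powr) auto
  define A where "A = real q * real q"
  have ev2: "\<forall>\<^sub>F k in sequentially. A * (real (n k) + 1) < t ^ (n k)"
    using filterlim_iff[THEN iffD1, OF nlim, rule_format, OF asym[OF t1, of A]] .
  have "\<forall>\<^sub>F k in sequentially. real (L k) \<le> 2 powr (\<epsilon> * real (n k)) \<and> A * (real (n k) + 1) < t ^ (n k)"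
    using Lb[OF e0] ev2 by (rule eventually_conj)
  then obtain k where k1: "real (L k) \<le> 2 powr (\<epsilon> * real (n k))" and k2: "A * (real (n k) + 1) < t ^ (n k)"
    by (auto simp: eventually_sequentially)
  define N where "N = n k"
  define X where "X = real q powr (r * real N / 2)"
  have Xp: "X > 0" using qr by (simp add: X_def)
  have tX: "t ^ N = X"
  proof -
    have "t ^ N = t powr real N" using t1 by (simp add: powr_realpow)
    also have "\<dots> = X" unfolding t_def X_def by (simp add: powr_powr)
    finally show ?thesis .
  qed
  have eX: "2 powr (\<epsilon> * real N) = X"
  proof -
    have "2 powr (\<epsilon> * real N) = 2 powr (log 2 (real q) * (r * real N / 2))"
      by (simp add: \<epsilon>_def algebra_simps)
    also have "\<dots> = (2 powr log 2 (real q)) powr (r * real N / 2)" by (simp add: powr_powr)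
    also have "\<dots> = X" using qr by (simp add: X_def)
    finally show ?thesis .
  qed
  have cb: "card (C k) \<le> q * (n k + 1) * q * L k"
    using count_bound[OF q2 npos assms(2) assms(3) hyp codes ld] .
  have cbr: "real (card (C k)) \<le> A * (real N + 1) * real (L k)"
  proof -
    have "real (card (C k)) \<le> real (q * (n k + 1) * q * L k)" using cb by (simp only: of_nat_le_iff)
    then show ?thesis by (simp add: A_def N_def algebra_simps)
  qed
  have rl: "r * real N \<le> log (real q) (real (card (C k)))"
    using rate[of k] npos[of k] by (simp add: code_rate_def N_def le_divide_eq mult.commute)
  have cpos: "card (C k) > 0"
  proof (rule ccontr)
    assume "\<not> card (C k) > 0"
    then have "log (real q) (real (card (C k))) = 0" by (simp add: log_def)
    moreover have "r * real N > 0" using r0 npos[of k] by (simp add: N_def)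
    ultimately show False using rl by linarith
  qed
  have "X * X = real q powr (r * real N)" by (simp add: X_def powr_add[symmetric])
  also have "\<dots> \<le> real q powr (log (real q) (real (card (C k))))"
    using rl qr by (intro powr_mono) auto
  also have "\<dots> = real (card (C k))" using qr cpos by simp
  also have "\<dots> \<le> A * (real N + 1) * real (L k)" by (rule cbr)
  also have "\<dots> \<le> A * (real N + 1) * X"
    using k1 eX by (intro mult_left_mono) (auto simp: A_def N_def)
  also have "\<dots> < X * X" using k2 tX Xp by (simp add: N_def)
  finally show False by simp
qed

end
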